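(* Let $n\geq 2$ and $m \geq 2$ be integers, let $\mathcal{W}$ be a vector space over a field $\mathbb{F}$ with $\operatorname{Char}(\mathbb{F})=0$ or $\operatorname{Char}(\mathbb{F})>m$, let $\{v_a : a \in [n]\}$ be a multiset of non-zero vectors in $\mathcal{W}$ with $\operatorname{k-rank}(v_a : a \in [n]) \geq 2$, let $\{\alpha_a : a \in [n]\} \subseteq \mathbb{F}^\times$ be a multiset of non-zero scalars, and let $d=\dim\operatorname{span}\{v_a : a \in [n]\}$. If $2n+1 \leq m+2d-2$, then $\sum_{a \in [n]} \alpha_a v_a^{\otimes m}$ constitutes a unique Waring rank decomposition. More generally, if $n +r +1\leq m+2d-2$ for some integer $r \geq n$, then $\sum_{a \in [n]} \alpha_a v_a^{\otimes m}$ is the unique symmetric decomposition of this tensor into at most $r$ terms.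
   Context: $[n]=\{1,\dots,n\}$. The Kruskal rank $\operatorname{k-rank}$ of a multiset of vectors is the largest $k$ such that every sub-multiset of size $k$ is linearly independent. For $v=\sum_{a\in[n]}\alpha_a v_a^{\otimes m}$ and an integer $\tilde n\ge n$: this symmetric decomposition is the unique symmetric decomposition of $v$ into at most $\tilde n$ terms if for every non-negative integer $r'\le\tilde n$, every multiset of non-zero vectors $\{u_a:a\in[r']\}\subseteq\mathcal{W}$ and non-zero scalars $\{\beta_a:a\in[r']\}$ with $v=\sum_{a\in[r']}\beta_a u_a^{\otimes m}$, either $\operatorname{k-rank}(u_a:a\in[r'])=1$, or $r'=n$ and $\{\alpha_a v_a^{\otimes m}:a\in[n]\}=\{\beta_a u_a^{\otimes m}:a\in[n]\}$ as multisets. It constitutes a unique Waring rank decomposition if for every non-negative integer $r'\le n$, non-zero vectors $\{u_a:a\in[r']\}$ and non-zero scalars $\{\beta_a\}$ with $v=\sum_{a\in[r']}\beta_a u_a^{\otimes m}$, it holds that $r'=n$ and $\{\alpha_a v_a^{\otimes m}\}=\{\beta_a u_a^{\otimes m}\}$ as multisets. *)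

theory Defs
  imports Complex_Main "HOL-Library.Multiset" "HOL-Library.Function_Algebras"
begin

text \<open>Coordinate model of a vector space over a field 'f: vectors are functions
  'i => 'f (i.e. elements of F^I), with pointwise operations; W is a subspace.\<close>

definition vscale :: "'f::field \<Rightarrow> ('i \<Rightarrow> 'f) \<Rightarrow> ('i \<Rightarrow> 'f)" where
  "vscale c x = (\<lambda>j. c * x j)"

definition lin_indep_fam :: "(nat \<Rightarrow> ('i \<Rightarrow> 'f::field)) \<Rightarrow> nat set \<Rightarrow> bool" where
  "lin_indep_fam u S \<longleftrightarrow>
     (\<forall>c. (\<Sum>a\<in>S. vscale (c a) (u a)) = 0 \<longrightarrow> (\<forall>a\<in>S. c a = 0))"

definition krank :: "(nat \<Rightarrow> ('i \<Rightarrow> 'f::field)) \<Rightarrow> nat \<Rightarrow> nat" where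
  "krank u r = (GREATEST k. k \<le> r \<and>
     (\<forall>S. S \<subseteq> {1..r} \<and> card S = k \<longrightarrow> lin_indep_fam u S))"

text \<open>The symmetric tensor c * x^{(tensor m)} in coordinates: its entry at the
  multi-index (js 0, ..., js (m-1)) is c * x(js 0) * ... * x(js (m-1)).\<close>
definition sym_tensor :: "nat \<Rightarrow> 'f::field \<Rightarrow> ('i \<Rightarrow> 'f) \<Rightarrow> ((nat \<Rightarrow> 'i) \<Rightarrow> 'f)" where
  "sym_tensor m c x = (\<lambda>js. c * (\<Prod>k<m. x (js k)))"

definition tensor_sum :: "nat \<Rightarrow> nat \<Rightarrow> (nat \<Rightarrow> 'f::field) \<Rightarrow> (nat \<Rightarrow> ('i \<Rightarrow> 'f))
    \<Rightarrow> ((nat \<Rightarrow> 'i) \<Rightarrow> 'f)" where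
  "tensor_sum m r \<beta> u = (\<Sum>a\<in>{1..r}. sym_tensor m (\<beta> a) (u a))"

definition term_mset :: "nat \<Rightarrow> nat \<Rightarrow> (nat \<Rightarrow> 'f::field) \<Rightarrow> (nat \<Rightarrow> ('i \<Rightarrow> 'f))
    \<Rightarrow> ((nat \<Rightarrow> 'i) \<Rightarrow> 'f) multiset" where
  "term_mset m r \<beta> u = image_mset (\<lambda>a. sym_tensor m (\<beta> a) (u a)) (mset_set {1..r})"

definition unique_sym_decomp ::
  "('i \<Rightarrow> 'f::field) set \<Rightarrow> nat \<Rightarrow> nat \<Rightarrow> (nat \<Rightarrow> 'f) \<Rightarrow> (nat \<Rightarrow> ('i \<Rightarrow> 'f)) \<Rightarrow> nat \<Rightarrow> bool" where
  "unique_sym_decomp W m n \<alpha> v rt \<longleftrightarrow>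
     (\<forall>r' u \<beta>. r' \<le> rt \<and> (\<forall>a\<in>{1..r'}. u a \<in> W \<and> u a \<noteq> 0 \<and> \<beta> a \<noteq> 0)
        \<and> tensor_sum m n \<alpha> v = tensor_sum m r' \<beta> u
      \<longrightarrow> krank u r' = 1 \<or> (r' = n \<and> term_mset m n \<alpha> v = term_mset m r' \<beta> u))"

definition unique_waring_decomp ::
  "('i \<Rightarrow> 'f::field) set \<Rightarrow> nat \<Rightarrow> nat \<Rightarrow> (nat \<Rightarrow> 'f) \<Rightarrow> (nat \<Rightarrow> ('i \<Rightarrow> 'f)) \<Rightarrow> bool" where
  "unique_waring_decomp W m n \<alpha> v \<longleftrightarrow>
     (\<forall>r' u \<beta>. r' \<le> n \<and> (\<forall>a\<in>{1..r'}. u a \<in> W \<and> u a \<noteq> 0 \<and> \<beta> a \<noteq> 0)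
        \<and> tensor_sum m n \<alpha> v = tensor_sum m r' \<beta> u
      \<longrightarrow> r' = n \<and> term_mset m n \<alpha> v = term_mset m r' \<beta> u)"

end

theory Submission
  imports Defs
begin


lemma vscale_apply[simp]: "vscale c x j = c * x j" by (simp add: vscale_def)

interpretation V: vector_space vscale
  by unfold_locales (auto simp: vscale_def fun_eq_iff algebra_simps)

lemma sum_fun_apply: "(\<Sum>i\<in>I. f i) x = (\<Sum>i\<in>I. f i x)"
  by (induction I rule: infinite_finite_induct) auto

definition coordfun :: "(('i \<Rightarrow> 'f::field) \<Rightarrow> 'f) \<Rightarrow> bool" where
  "coordfun f \<longleftrightarrow> (\<exists>J lam. finite J \<and> (\<forall>x. f x = (\<Sum>j\<in>J. lam j * x j)))"

lemma coordfun_add: "coordfun f \<Longrightarrow> f (x + y) = f x + f y"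
  unfolding coordfun_def by (auto simp: algebra_simps sum.distrib)
lemma coordfun_scale: "coordfun f \<Longrightarrow> f (vscale c x) = c * f x"
  unfolding coordfun_def by (auto simp: algebra_simps sum_distrib_left)
lemma coordfun_zero: "coordfun f \<Longrightarrow> f 0 = 0"
  unfolding coordfun_def by auto

lemma coordfun_span: assumes "coordfun f" "\<forall>y\<in>B. f y = 0" "x \<in> V.span B" shows "f x = 0"
  using assms(3)
proof (induction rule: V.span_induct_alt)
  case base then show ?case by (rule coordfun_zero[OF assms(1)])
next
  case (step c x y)
  have e: "f (vscale c x + y) = c * f x + f y"
    by (simp only: coordfun_add[OF assms(1)] coordfun_scale[OF assms(1)])
  have "c * f x + f y = 0" using step assms(2) by simp
  with e show ?case by (rule trans)
qed

lemma coordfun_ext: fixes lam :: "'i \<Rightarrow> 'f::field" assumes "finite J" "finite J'" "J \<subseteq> J'"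
  shows "(\<Sum>j\<in>J. lam j * x j) = (\<Sum>j\<in>J'. (if j \<in> J then lam j else 0) * x j)"
proof -
  have "(\<Sum>j\<in>J'. (if j \<in> J then lam j else 0) * x j) = (\<Sum>j\<in>J'. (if j \<in> J then lam j * x j else 0))"
    by (rule sum.cong) auto
  also have "\<dots> = (\<Sum>j\<in>J' \<inter> J. lam j * x j)" by (simp add: sum.inter_restrict[OF assms(2)] )
  also have "J' \<inter> J = J" using assms by auto
  finally show ?thesis by simp
qed

lemma coordfun_lin: assumes "coordfun f" "coordfun g" shows "coordfun (\<lambda>x. a * f x + b * g x)"
proof -
  obtain J1 l1 where 1: "finite J1" "\<forall>x. f x = (\<Sum>j\<in>J1. l1 j * x j)" using assms(1) coordfun_def by blast
  obtain J2 l2 where 2: "finite J2" "\<forall>x. g x = (\<Sum>j\<in>J2. l2 j * x j)" using assms(2) coordfun_def by blast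
  define J where "J = J1 \<union> J2"
  define L1 where "L1 = (\<lambda>j. if j \<in> J1 then l1 j else 0)"
  define L2 where "L2 = (\<lambda>j. if j \<in> J2 then l2 j else 0)"
  have fJ: "finite J" unfolding J_def using 1(1) 2(1) by simp
  have e1: "f x = (\<Sum>j\<in>J. L1 j * x j)" for x
    unfolding L1_def using coordfun_ext[OF 1(1) fJ, of l1 x] 1(2) unfolding J_def by simp
  have e2: "g x = (\<Sum>j\<in>J. L2 j * x j)" for x
    unfolding L2_def using coordfun_ext[OF 2(1) fJ, of l2 x] 2(2) unfolding J_def by simp
  have "a * f x + b * g x = (\<Sum>j\<in>J. (a * L1 j + b * L2 j) * x j)" for x
  proof -
    have "(\<Sum>j\<in>J. (a * L1 j + b * L2 j) * x j) = (\<Sum>j\<in>J. a * (L1 j * x j) + b * (L2 j * x j))"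
      by (rule sum.cong) (simp_all add: distrib_right mult.assoc)
    also have "\<dots> = a * (\<Sum>j\<in>J. L1 j * x j) + b * (\<Sum>j\<in>J. L2 j * x j)"
      by (simp add: sum.distrib sum_distrib_left)
    finally show ?thesis using e1 e2 by simp
  qed
  then show ?thesis unfolding coordfun_def
    by (intro exI[of _ J] exI[of _ "\<lambda>j. a * L1 j + b * L2 j"] conjI fJ allI) simp
qed

lemma coordfun_eval: "coordfun (\<lambda>x. x j)"
  unfolding coordfun_def by (rule exI[of _ "{j}"], rule exI[of _ "\<lambda>_. 1"]) auto

definition par :: "('i \<Rightarrow> 'f::field) \<Rightarrow> ('i \<Rightarrow> 'f) \<Rightarrow> bool" where
  "par x y \<longleftrightarrow> (\<exists>t. x = vscale t y)"

lemma kill_one: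
  assumes "p \<noteq> 0" "\<not> par q p"
  shows "\<exists>f. coordfun f \<and> f q = 0 \<and> f p \<noteq> 0"
proof -
  obtain j where j: "p j \<noteq> 0" using assms(1) by (auto simp: fun_eq_iff)
  show ?thesis
  proof (cases "q j = 0")
    case True then show ?thesis using coordfun_eval[of j] j by blast
  next
    case False
    have "q \<noteq> vscale (q j / p j) p" using assms(2) par_def by blast
    then obtain j' where j': "q j' \<noteq> q j / p j * p j'" by (auto simp: fun_eq_iff)
    let ?f = "\<lambda>x. q j' * x j + (- q j) * x j'"
    have "coordfun ?f" by (rule coordfun_lin[OF coordfun_eval coordfun_eval])
    moreover have "?f q = 0" by simp
    moreover have "?f p \<noteq> 0"
    proof
      assume "?f p = 0"
      then have "q j' * p j = q j * p j'" by (simp add: algebra_simps)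
      then have "q j' = q j / p j * p j'" using j by (simp add: field_simps)
      then show False using j' by simp
    qed
    ultimately show ?thesis by blast
  qed
qed

lemma coordfun_smult: assumes "coordfun f" shows "coordfun (\<lambda>x. a * f x)"
proof -
  obtain J l where 1: "finite J" "\<forall>x. f x = (\<Sum>j\<in>J. l j * x j)" using assms coordfun_def by blast
  have "\<forall>x. a * f x = (\<Sum>j\<in>J. (a * l j) * x j)" using 1 by (simp add: sum_distrib_left mult.assoc)
  then show ?thesis using 1 unfolding coordfun_def
    by (intro exI[of _ J] exI[of _ "\<lambda>j. a * l j"] conjI allI) simp_all
qed

lemma separate_aux:
  fixes B :: "('i \<Rightarrow> 'f::field) set"
  assumes "finite B"
  shows "\<forall>p. p \<in> V.span B \<or> (\<exists>f. coordfun f \<and> (\<forall>y\<in>B. f y = 0) \<and> f p = 1)"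
  using assms
proof (induction B rule: finite_induct)
  case empty
  show ?case
  proof
    fix p :: "'i \<Rightarrow> 'f"
    show "p \<in> V.span {} \<or> (\<exists>f. coordfun f \<and> (\<forall>y\<in>{}. f y = 0) \<and> f p = 1)"
    proof (cases "p = 0")
      case True then show ?thesis by (simp add: V.span_zero)
    next
      case False
      then obtain j where j: "p j \<noteq> 0" by (auto simp: fun_eq_iff)
      have "coordfun (\<lambda>x. (1 / p j) * x j)" by (rule coordfun_smult[OF coordfun_eval])
      then show ?thesis using j by auto
    qed
  qed
next
  case (insert b B)
  show ?case
  proof
    fix p :: "'i \<Rightarrow> 'f"
    show "p \<in> V.span (insert b B) \<or> (\<exists>f. coordfun f \<and> (\<forall>y\<in>insert b B. f y = 0) \<and> f p = 1)"
    proof (cases "p \<in> V.span (insert b B)")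
      case True then show ?thesis by simp
    next
      case pn: False
      then have pB: "p \<notin> V.span B" by (meson V.span_mono subset_insertI subsetD)
      show ?thesis
      proof (cases "b \<in> V.span B")
        case True
        obtain f where f: "coordfun f" "\<forall>y\<in>B. f y = 0" "f p = 1" using insert.IH pB by blast
        have "f b = 0" using coordfun_span[OF f(1) f(2) True] .
        then show ?thesis using f by auto
      next
        case False
        obtain fb where fb: "coordfun fb" "\<forall>y\<in>B. fb y = 0" "fb b = 1" using insert.IH False by blast
        define x where "x = p + vscale (- fb p) b"
        have xB: "x \<notin> V.span B"
        proof
          assume "x \<in> V.span B"
          then have "x \<in> V.span (insert b B)" by (meson V.span_mono subset_insertI subsetD)
          moreover have "vscale (fb p) b \<in> V.span (insert b B)" by (simp add: V.span_base V.span_scale)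
          ultimately have "x + vscale (fb p) b \<in> V.span (insert b B)" by (rule V.span_add)
          moreover have "x + vscale (fb p) b = p" unfolding x_def by (auto simp: fun_eq_iff)
          ultimately show False using pn by simp
        qed
        obtain fx where fx: "coordfun fx" "\<forall>y\<in>B. fx y = 0" "fx x = 1" using insert.IH xB by blast
        define g where "g = (\<lambda>y. 1 * fx y + (- fx b) * fb y)"
        have g: "coordfun g" unfolding g_def by (rule coordfun_lin[OF fx(1) fb(1)])
        have "fb x = 0" by (simp only: x_def coordfun_add[OF fb(1)] coordfun_scale[OF fb(1)] fb(3)) simp
        have "p = x + vscale (fb p) b" unfolding x_def by (auto simp: fun_eq_iff)
        then have "g p = g x + fb p * g b" by (metis coordfun_add coordfun_scale g)
        also have "g b = 0" unfolding g_def using fb by simp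
        also have "g x = 1" unfolding g_def using fx \<open>fb x = 0\<close> by simp
        finally have "g p = 1" by simp
        moreover have "\<forall>y\<in>insert b B. g y = 0" unfolding g_def using fx fb by auto
        ultimately show ?thesis using g by blast
      qed
    qed
  qed
qed

lemma separate:
  assumes "finite B" "p \<notin> V.span B"
  obtains f where "coordfun f" "\<forall>y\<in>B. f y = 0" "f p = 1"
proof -
  have "p \<in> V.span B \<or> (\<exists>f. coordfun f \<and> (\<forall>y\<in>B. f y = 0) \<and> f p = 1)"
    using separate_aux[OF assms(1)] by (rule spec)
  then show ?thesis using assms(2) that by auto
qed


lemma dim_mono_fin:
  assumes "S \<subseteq> V.span T" "finite T" shows "V.dim S \<le> V.dim T"
proof -
  obtain B where B: "B \<subseteq> T" "V.independent B" "T \<subseteq> V.span B" "card B = V.dim T"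
    by (rule V.basis_exists)
  have "finite B" using B(1) assms(2) finite_subset by blast
  moreover have "S \<subseteq> V.span B" using assms(1) V.span_minimal[OF B(3) V.subspace_span] by blast
  ultimately show ?thesis using V.dim_le_card[of S B] B(4) by simp
qed

lemma hyperplane:
  fixes X :: "('i \<Rightarrow> 'f::field) set"
  assumes "finite X" "p \<noteq> 0"
  obtains f where "coordfun f" "f p \<noteq> 0" "V.dim (insert p X) \<le> card {x\<in>X. f x = 0} + 1"
proof -
  have "V.independent {p}" using assms(2) by (simp add: V.independent_insert V.span_empty)
  then obtain B where B: "{p} \<subseteq> B" "B \<subseteq> insert p X" "V.independent B" "insert p X \<subseteq> V.span B"
    using V.maximal_independent_subset_extend[of "{p}" "insert p X"] by blast
  have cB: "card B = V.dim (insert p X)" using V.basis_card_eq_dim[OF B(2) B(4) B(3)] .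
  have fB: "finite B" using B(2) assms(1) finite_subset by blast
  have pn: "p \<notin> V.span (B - {p})" using B(1) B(3) unfolding V.dependent_def by auto
  obtain f where f: "coordfun f" "\<forall>y\<in>B - {p}. f y = 0" "f p = 1"
    using separate[OF _ pn] fB by blast
  have "B - {p} \<subseteq> {x\<in>X. f x = 0}" using f(2) B(2) by auto
  then have "card (B - {p}) \<le> card {x\<in>X. f x = 0}" by (rule card_mono[rotated]) (use assms(1) in auto)
  moreover have "card B = card (B - {p}) + 1" using B(1) fB by (metis Suc_eq_plus1 card_Suc_Diff1 insert_subset)
  ultimately show ?thesis using that f cB by simp
qed


lemma slice:
  fixes w :: "'k \<Rightarrow> ('i \<Rightarrow> 'f::field)" and m :: nat and fs :: "nat \<Rightarrow> ('i \<Rightarrow> 'f) \<Rightarrow> 'f"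
  assumes "\<forall>js. (\<Sum>i\<in>I. c i * (\<Prod>k<Suc m. w i (js k))) = 0"
  shows "(\<Sum>i\<in>I. (c i * w i j) * (\<Prod>k<m. w i (js k))) = 0"
proof -
  have p: "(\<Prod>k<m. w i ((js(m := j)) k)) = (\<Prod>k<m. w i (js k))" for i
    by (rule prod.cong) auto
  have "c i * (\<Prod>k<Suc m. w i ((js(m := j)) k)) = (c i * w i j) * (\<Prod>k<m. w i (js k))" for i
    using p[of i] by (simp add: prod.lessThan_Suc mult_ac)
  then have "(\<Sum>i\<in>I. c i * (\<Prod>k<Suc m. w i ((js(m := j)) k))) = (\<Sum>i\<in>I. (c i * w i j) * (\<Prod>k<m. w i (js k)))"
    by (rule sum.cong[OF refl])
  then show ?thesis using assms by metis
qed

lemma contract: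
  fixes w :: "'k \<Rightarrow> ('i \<Rightarrow> 'f::field)" and m :: nat and fs :: "nat \<Rightarrow> ('i \<Rightarrow> 'f) \<Rightarrow> 'f"
  assumes "finite I" "\<forall>js. (\<Sum>i\<in>I. c i * (\<Prod>k<m. w i (js k))) = 0" "\<forall>k. coordfun (fs k)"
  shows "(\<Sum>i\<in>I. c i * (\<Prod>k<m. fs k (w i))) = 0"
  using assms(2)
proof (induction m arbitrary: c)
  case 0 then show ?case by simp
next
  case (Suc m)
  obtain J lam where J: "finite J" "\<forall>x. fs m x = (\<Sum>j\<in>J. lam j * x j)" using assms(3) coordfun_def by blast
  have "\<forall>js. (\<Sum>i\<in>I. (c i * fs m (w i)) * (\<Prod>k<m. w i (js k))) = 0"
  proof
    fix js
    have "(\<Sum>i\<in>I. (c i * fs m (w i)) * (\<Prod>k<m. w i (js k)))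
        = (\<Sum>i\<in>I. \<Sum>j\<in>J. lam j * ((c i * w i j) * (\<Prod>k<m. w i (js k))))"
      by (rule sum.cong[OF refl]) (simp add: J(2) sum_distrib_left sum_distrib_right mult_ac)
    also have "\<dots> = (\<Sum>j\<in>J. lam j * (\<Sum>i\<in>I. (c i * w i j) * (\<Prod>k<m. w i (js k))))"
      by (subst sum.swap) (simp add: sum_distrib_left)
    also have "\<dots> = 0" using slice[OF Suc.prems] by simp
    finally show "(\<Sum>i\<in>I. (c i * fs m (w i)) * (\<Prod>k<m. w i (js k))) = 0" .
  qed
  then have "(\<Sum>i\<in>I. (c i * fs m (w i)) * (\<Prod>k<m. fs k (w i))) = 0" by (rule Suc.IH)
  then show ?case by (simp add: prod.lessThan_Suc mult_ac)
qed



lemma par_refl: "par x x" unfolding par_def by (rule exI[of _ 1]) (simp add: vscale_def)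

lemma class_zero:
  fixes w :: "'k \<Rightarrow> ('i \<Rightarrow> 'f::field)" and m :: nat and fs :: "nat \<Rightarrow> ('i \<Rightarrow> 'f) \<Rightarrow> 'f"
  assumes "finite I" "\<forall>js. (\<Sum>i\<in>I. c i * (\<Prod>k<m. w i (js k))) = 0" "\<forall>k. coordfun (fs k)"
    and "\<forall>k<m. fs k p \<noteq> 0" "\<forall>i\<in>I. \<not> par (w i) p \<longrightarrow> (\<exists>k<m. fs k (w i) = 0)"
  shows "(\<Sum>i\<in>{i\<in>I. par (w i) p}. c i * (\<Prod>k<m. w i (js k))) = 0"
proof -
  have c0: "(\<Sum>i\<in>I. c i * (\<Prod>k<m. fs k (w i))) = 0" by (rule contract[OF assms(1-3)])
  have "(\<Sum>i\<in>I. c i * (\<Prod>k<m. fs k (w i))) = (\<Sum>i\<in>{i\<in>I. par (w i) p}. c i * (\<Prod>k<m. fs k (w i)))"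
  proof (rule sum.mono_neutral_right[OF assms(1)])
    show "\<forall>i\<in>I - {i \<in> I. par (w i) p}. c i * (\<Prod>k<m. fs k (w i)) = 0"
    proof
      fix i assume "i \<in> I - {i \<in> I. par (w i) p}"
      then have "i \<in> I" "\<not> par (w i) p" by simp_all
      then have "\<exists>k<m. fs k (w i) = 0" using assms(5) by blast
      then obtain k where "k < m" "fs k (w i) = 0" by blast
      then have "(\<Prod>k<m. fs k (w i)) = 0" using prod_zero_iff[of "{..<m}" "\<lambda>k. fs k (w i)"] by auto
      then show "c i * (\<Prod>k<m. fs k (w i)) = 0" by simp
    qed
  qed auto
  with c0 have c1: "(\<Sum>i\<in>{i\<in>I. par (w i) p}. c i * (\<Prod>k<m. fs k (w i))) = 0" by simp
  have e: "(c i * (\<Prod>k<m. w i (js k))) * (\<Prod>k<m. fs k p) = (c i * (\<Prod>k<m. fs k (w i))) * (\<Prod>k<m. p (js k))"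
    if P: "par (w i) p" for i
  proof -
    obtain t where t: "w i = vscale t p" using P unfolding par_def by blast
    have "(\<Prod>k<m. w i (js k)) = t ^ m * (\<Prod>k<m. p (js k))" by (simp add: t prod.distrib)
    moreover have "(\<Prod>k<m. fs k (w i)) = t ^ m * (\<Prod>k<m. fs k p)"
      using assms(3) by (simp add: t coordfun_scale prod.distrib)
    ultimately show ?thesis by (simp add: mult_ac)
  qed
  have "(\<Sum>i\<in>{i\<in>I. par (w i) p}. c i * (\<Prod>k<m. w i (js k))) * (\<Prod>k<m. fs k p)
      = (\<Sum>i\<in>{i\<in>I. par (w i) p}. (c i * (\<Prod>k<m. w i (js k))) * (\<Prod>k<m. fs k p))"
    by (simp add: sum_distrib_right)
  also have "\<dots> = (\<Sum>i\<in>{i\<in>I. par (w i) p}. (c i * (\<Prod>k<m. fs k (w i))) * (\<Prod>k<m. p (js k)))"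
    by (rule sum.cong[OF refl]) (use e in auto)
  also have "\<dots> = 0" using c1 by (simp add: sum_distrib_right[symmetric])
  finally have "(\<Sum>i\<in>{i\<in>I. par (w i) p}. c i * (\<Prod>k<m. w i (js k))) * (\<Prod>k<m. fs k p) = 0" .
  moreover have "(\<Prod>k<m. fs k p) \<noteq> 0" using assms(4) by simp
  ultimately show ?thesis by simp
qed

lemma cover0:
  fixes w :: "'k \<Rightarrow> ('i \<Rightarrow> 'f::field)" and f0 :: "('i \<Rightarrow> 'f) \<Rightarrow> 'f"
  assumes "finite U" "\<forall>i\<in>U. \<exists>f. coordfun f \<and> f p \<noteq> 0 \<and> f (w i) = 0" "coordfun f0" "f0 p \<noteq> 0"
  shows "card U \<le> M \<Longrightarrow> \<exists>fs. (\<forall>k. coordfun (fs k)) \<and> (\<forall>k. fs k p \<noteq> 0) \<and> (\<forall>i\<in>U. \<exists>k<M. fs k (w i) = 0)"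
  using assms(1,2)
proof (induction U arbitrary: M rule: finite_induct)
  case empty
  show ?case by (rule exI[of _ "\<lambda>_. f0"]) (use assms(3,4) in auto)
next
  case (insert i U)
  then obtain M' where M: "M = Suc M'" "card U \<le> M'" by (cases M) auto
  obtain fs where fs: "\<forall>k. coordfun (fs k)" "\<forall>k. fs k p \<noteq> 0" "\<forall>i\<in>U. \<exists>k<M'. fs k (w i) = 0"
    using insert.IH[OF M(2)] insert.prems by auto
  obtain g where g: "coordfun g" "g p \<noteq> 0" "g (w i) = 0" using insert.prems by auto
  let ?fs = "fs(M' := g)"
  have "\<forall>k. coordfun (?fs k)" using fs g by auto
  moreover have "\<forall>k. ?fs k p \<noteq> 0" using fs g by auto
  moreover have "\<forall>i'\<in>insert i U. \<exists>k<M. ?fs k (w i') = 0"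
  proof
    fix i' assume "i' \<in> insert i U"
    then show "\<exists>k<M. ?fs k (w i') = 0"
    proof
      assume "i' = i" then show ?thesis using g M by (intro exI[of _ M']) auto
    next
      assume "i' \<in> U"
      then obtain k where "k < M'" "fs k (w i') = 0" using fs by auto
      then show ?thesis using M by (intro exI[of _ k]) auto
    qed
  qed
  ultimately show ?case by blast
qed

lemma build_fs:
  fixes w :: "'k \<Rightarrow> ('i \<Rightarrow> 'f::field)" and f1 f2 :: "('i \<Rightarrow> 'f) \<Rightarrow> 'f"
  assumes "finite I" "p \<noteq> 0" "coordfun f1" "f1 p \<noteq> 0" "coordfun f2" "f2 p \<noteq> 0"
    and "card {i\<in>I. \<not> par (w i) p \<and> f1 (w i) \<noteq> 0 \<and> f2 (w i) \<noteq> 0} + 2 \<le> m"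
  shows "\<exists>fs. (\<forall>k. coordfun (fs k)) \<and> (\<forall>k<m. fs k p \<noteq> 0) \<and> (\<forall>i\<in>I. \<not> par (w i) p \<longrightarrow> (\<exists>k<m. fs k (w i) = 0))"
proof -
  let ?U = "{i\<in>I. \<not> par (w i) p \<and> f1 (w i) \<noteq> 0 \<and> f2 (w i) \<noteq> 0}"
  have K: "\<forall>i\<in>?U. \<exists>f. coordfun f \<and> f p \<noteq> 0 \<and> f (w i) = 0" using kill_one assms(2) by blast
  have cU: "card ?U \<le> m - 2" using assms(7) by simp
  have fU: "finite ?U" using assms(1) by simp
  obtain fs where fs: "\<forall>k. coordfun (fs k)" "\<forall>k. fs k p \<noteq> 0" "\<forall>i\<in>?U. \<exists>k<m-2. fs k (w i) = 0"
    using cover0[OF fU K assms(3) assms(4) cU] by blast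
  let ?fs = "fs(m-2 := f1, m-1 := f2)"
  have "\<forall>k. coordfun (?fs k)" using fs assms by auto
  moreover have "\<forall>k<m. ?fs k p \<noteq> 0" using fs assms by auto
  moreover have "\<forall>i\<in>I. \<not> par (w i) p \<longrightarrow> (\<exists>k<m. ?fs k (w i) = 0)"
  proof (intro ballI impI)
    fix i assume i: "i \<in> I" "\<not> par (w i) p"
    consider "f2 (w i) = 0" | "f2 (w i) \<noteq> 0" "f1 (w i) = 0" | "i \<in> ?U" using i by auto
    then show "\<exists>k<m. ?fs k (w i) = 0"
    proof cases
      case 1 then show ?thesis using assms(7) by (intro exI[of _ "m-1"]) auto
    next
      case 2 then show ?thesis using assms(7) by (intro exI[of _ "m-2"]) auto
    next
      case 3
      then obtain k where "k < m - 2" "fs k (w i) = 0" using fs by blast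
      then show ?thesis by (intro exI[of _ k]) auto
    qed
  qed
  ultimately show ?thesis by blast
qed

lemma count_side:
  fixes v :: "'k \<Rightarrow> ('i \<Rightarrow> 'f::field)"
  assumes "finite A1" "V.dim (insert p (v ` A1)) \<le> card {x\<in>v ` A1. f1 x = 0} + 1"
  shows "card {a\<in>A1. f1 (v a) \<noteq> 0} + V.dim (insert p (v ` A1)) \<le> card A1 + 1"
proof -
  have "{x\<in>v ` A1. f1 x = 0} = v ` {a\<in>A1. f1 (v a) = 0}" by auto
  moreover have "card (v ` {a\<in>A1. f1 (v a) = 0}) \<le> card {a\<in>A1. f1 (v a) = 0}"
    by (rule card_image_le) (use assms(1) in simp)
  ultimately have "card {x\<in>v ` A1. f1 x = 0} \<le> card {a\<in>A1. f1 (v a) = 0}" by simp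
  moreover have "card {a\<in>A1. f1 (v a) \<noteq> 0} + card {a\<in>A1. f1 (v a) = 0} = card A1"
  proof -
    have "{a\<in>A1. f1 (v a) \<noteq> 0} \<union> {a\<in>A1. f1 (v a) = 0} = A1" by auto
    moreover have "{a\<in>A1. f1 (v a) \<noteq> 0} \<inter> {a\<in>A1. f1 (v a) = 0} = {}" by auto
    ultimately show ?thesis using assms(1) card_Un_disjoint[of "{a\<in>A1. f1 (v a) \<noteq> 0}" "{a\<in>A1. f1 (v a) = 0}"] by simp
  qed
  ultimately show ?thesis using assms(2) by linarith
qed



lemma lin_indep_subset:
  assumes "finite S" "S' \<subseteq> S" "lin_indep_fam u S"
  shows "lin_indep_fam u S'"
  unfolding lin_indep_fam_def
proof (intro allI impI ballI)
  fix c a assume h: "(\<Sum>a\<in>S'. vscale (c a) (u a)) = 0" and a: "a \<in> S'"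
  define c' where "c' = (\<lambda>x. if x \<in> S' then c x else 0)"
  have "(\<Sum>x\<in>S. vscale (c' x) (u x)) = (\<Sum>x\<in>S'. vscale (c' x) (u x))"
    by (rule sum.mono_neutral_right[OF assms(1) assms(2)]) (auto simp: c'_def vscale_def fun_eq_iff)
  also have "\<dots> = (\<Sum>x\<in>S'. vscale (c x) (u x))" by (rule sum.cong) (auto simp: c'_def)
  finally have "(\<Sum>x\<in>S. vscale (c' x) (u x)) = 0" using h by simp
  then have "\<forall>x\<in>S. c' x = 0" using assms(3) unfolding lin_indep_fam_def by blast
  moreover have "a \<in> S" using a assms(2) by blast
  ultimately have "c' a = 0" by blast
  then show "c a = 0" using a by (simp add: c'_def)
qed

lemma indep2_nonpar:
  assumes "a \<noteq> b" "lin_indep_fam u {a, b}"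
  shows "\<not> par (u a) (u b)"
proof
  assume "par (u a) (u b)"
  then obtain t where t: "u a = vscale t (u b)" unfolding par_def by blast
  define c where "c = (\<lambda>x. if x = a then 1 else - t)"
  have "(\<Sum>x\<in>{a, b}. vscale (c x) (u x)) = vscale 1 (u a) + vscale (- t) (u b)"
    using assms(1) by (simp add: c_def)
  also have "\<dots> = 0" by (simp add: t fun_eq_iff vscale_def)
  finally have "c a = 0" using assms(2) unfolding lin_indep_fam_def by blast
  then show False by (simp add: c_def)
qed

lemma krank_pairs:
  assumes "krank u r \<ge> 2" "a \<in> {1..r}" "b \<in> {1..r}" "a \<noteq> b"
  shows "\<not> par (u a) (u b)"
proof -
  define Q where "Q = (\<lambda>k. k \<le> r \<and> (\<forall>S. S \<subseteq> {1..r} \<and> card S = k \<longrightarrow> lin_indep_fam u S))"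
  have em: "S = {}" if "S \<subseteq> {1..r}" "card S = 0" for S :: "nat set"
    using that finite_subset[OF that(1)] by simp
  have Q0: "Q 0" unfolding Q_def lin_indep_fam_def using em by blast
  have QK: "Q (krank u r)" unfolding krank_def Q_def[symmetric]
    by (rule GreatestI_nat[of Q 0 r, OF Q0]) (simp add: Q_def)
  have "card {a, b} \<le> krank u r" using assms(1,4) by simp
  moreover have "krank u r \<le> card {1..r}" using QK Q_def by simp
  ultimately obtain T where T: "{a, b} \<subseteq> T" "T \<subseteq> {1..r}" "card T = krank u r"
    using exists_subset_between[of "{a,b}" "krank u r" "{1..r}"] assms(2,3) by auto
  have "lin_indep_fam u T" using QK T unfolding Q_def by blast
  then have "lin_indep_fam u {a, b}" using lin_indep_subset[OF _ T(1)] T(2) finite_subset by blast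
  then show ?thesis using indep2_nonpar assms(4) by blast
qed

lemma krank_ge1:
  assumes "r \<ge> 1" "\<forall>a\<in>{1..r}. u a \<noteq> 0"
  shows "krank u r \<ge> 1"
proof -
  define Q where "Q = (\<lambda>k. k \<le> r \<and> (\<forall>S. S \<subseteq> {1..r} \<and> card S = k \<longrightarrow> lin_indep_fam u S))"
  have "Q 1" unfolding Q_def
  proof (intro conjI allI impI)
    show "1 \<le> r" by fact
    fix S assume S: "S \<subseteq> {1..r} \<and> card S = 1"
    then obtain a where a: "S = {a}" by (meson card_1_singletonE)
    then have "u a \<noteq> 0" using S assms(2) by auto
    then obtain j where j: "u a j \<noteq> 0" by (auto simp: fun_eq_iff)
    show "lin_indep_fam u S" unfolding lin_indep_fam_def a
    proof (intro allI impI ballI)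
      fix c x assume "(\<Sum>a\<in>{a}. vscale (c a) (u a)) = 0" "x \<in> {a}"
      then have "vscale (c a) (u a) = 0" "x = a" by auto
      then have "c a * u a j = 0" by (metis vscale_apply zero_fun_def)
      then show "c x = 0" using j \<open>x = a\<close> by simp
    qed
  qed
  then show ?thesis unfolding krank_def Q_def[symmetric]
    by (rule Greatest_le_nat[of Q 1 r]) (simp add: Q_def)
qed

lemma flatten:
  fixes v u :: "nat \<Rightarrow> ('i \<Rightarrow> 'f::field)" and \<alpha> \<beta> :: "nat \<Rightarrow> 'f" and fs :: "nat \<Rightarrow> ('i \<Rightarrow> 'f) \<Rightarrow> 'f"
  assumes fin: "finite A" "finite B"
  and T: "\<forall>js. (\<Sum>i\<in>A <+> B. case_sum \<alpha> \<beta> i * (\<Prod>k<Suc m'. case_sum v u i (js k))) = 0"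
  and a: "a \<in> A" "\<alpha> a \<noteq> 0"
  and fs: "\<forall>k. coordfun (fs k)" "\<forall>k<m'. fs k (v a) \<noteq> 0" "\<forall>a'\<in>A. a' \<noteq> a \<longrightarrow> (\<exists>k<m'. fs k (v a') = 0)"
  shows "v a \<in> V.span (u ` B)"
proof -
  define P where "P = (\<lambda>x. \<Prod>k<m'. fs k x)"
  have Pa: "P (v a) \<noteq> 0" unfolding P_def using fs(2) by simp
  have P0: "P (v a') = 0" if H: "a' \<in> A" "a' \<noteq> a" for a'
  proof -
    obtain k where "k < m'" "fs k (v a') = 0" using fs(3) H by blast
    then show ?thesis unfolding P_def using prod_zero_iff[of "{..<m'}" "\<lambda>k. fs k (v a')"] by auto
  qed
  define y where "y = (\<Sum>b\<in>B. vscale (\<beta> b * P (u b)) (u b))"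
  have y: "y \<in> V.span (u ` B)" unfolding y_def
    by (intro V.span_sum V.span_scale V.span_base) auto
  have eq: "\<alpha> a * P (v a) * v a j + y j = 0" for j
  proof -
    have S: "\<forall>js. (\<Sum>i\<in>A <+> B. (case_sum \<alpha> \<beta> i * case_sum v u i j) * (\<Prod>k<m'. case_sum v u i (js k))) = 0"
      using slice[OF T] by blast
    have "(\<Sum>i\<in>A <+> B. (case_sum \<alpha> \<beta> i * case_sum v u i j) * (\<Prod>k<m'. fs k (case_sum v u i))) = 0"
      by (rule contract[OF _ S fs(1)]) (use fin in simp)
    then have "(\<Sum>a'\<in>A. \<alpha> a' * v a' j * P (v a')) + (\<Sum>b\<in>B. \<beta> b * u b j * P (u b)) = 0"
      using fin by (simp add: sum.Plus P_def comp_def)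
    moreover have "(\<Sum>a'\<in>A. \<alpha> a' * v a' j * P (v a')) = \<alpha> a * v a j * P (v a)"
    proof -
      have "(\<Sum>a'\<in>A. \<alpha> a' * v a' j * P (v a')) = \<alpha> a * v a j * P (v a) + (\<Sum>a'\<in>A - {a}. \<alpha> a' * v a' j * P (v a'))"
        using fin(1) a(1) by (simp add: sum.remove)
      also have "(\<Sum>a'\<in>A - {a}. \<alpha> a' * v a' j * P (v a')) = 0"
        by (rule sum.neutral) (use P0 in auto)
      finally show ?thesis by simp
    qed
    moreover have "y j = (\<Sum>b\<in>B. \<beta> b * u b j * P (u b))"
      unfolding y_def sum_fun_apply by (simp add: mult_ac)
    ultimately show ?thesis by (simp add: mult_ac)
  qed
  have "v a = vscale (- 1 / (\<alpha> a * P (v a))) y"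
  proof
    fix j
    have "v a j = - y j / (\<alpha> a * P (v a))" using eq[of j] Pa a(2) by (simp add: field_simps add_eq_0_iff)
    then show "v a j = vscale (- 1 / (\<alpha> a * P (v a))) y j" by simp
  qed
  then show ?thesis using y V.span_scale by metis
qed



lemma span_par:
  assumes "par x p" shows "x \<in> V.span (insert p X)"
proof -
  obtain t where "x = vscale t p" using assms unfolding par_def by blast
  then show ?thesis by (metis V.span_base V.span_scale insertI1)
qed

lemma core:
  fixes v u :: "nat \<Rightarrow> ('i \<Rightarrow> 'f::field)" and \<alpha> \<beta> :: "nat \<Rightarrow> 'f" and m :: nat
  assumes fin: "finite A" "finite B"
  and nz: "\<forall>a\<in>A. v a \<noteq> 0" "\<forall>b\<in>B. u b \<noteq> 0" "\<forall>a\<in>A. \<alpha> a \<noteq> 0"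
  and vp: "\<forall>a\<in>A. \<forall>a'\<in>A. a \<noteq> a' \<longrightarrow> \<not> par (v a) (v a')"
  and T: "\<forall>js. (\<Sum>i\<in>A <+> B. case_sum \<alpha> \<beta> i * (\<Prod>k<m. case_sum v u i (js k))) = 0"
  and bnd1: "card A + card B + 3 \<le> m + 2 * V.dim (v ` A)"
  and bnd2: "card A + 3 \<le> m + V.dim (v ` A)"
  and i0: "i0 \<in> A <+> B"
  shows "(\<Sum>i\<in>{i\<in>A <+> B. par (case_sum v u i) (case_sum v u i0)}. case_sum \<alpha> \<beta> i * (\<Prod>k<m. case_sum v u i (js k))) = 0"
proof -
  define d where "d = V.dim (v ` A)"
  define w where "w = case_sum v u"
  define c where "c = case_sum \<alpha> \<beta>"
  define I where "I = A <+> B"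
  have fI: "finite I" unfolding I_def using fin by simp
  have dA: "d \<le> card A" unfolding d_def
    using V.dim_le_card'[of "v ` A"] card_image_le[OF fin(1), of v] fin(1) by simp
  obtain m' where m': "m = Suc m'" using bnd2 dA by (cases m) (auto simp: d_def)
  have vspan: "v a \<in> V.span (u ` B)" if aA: "a \<in> A" for a
  proof -
    let ?p = "v a"
    let ?A1 = "A - {a}"
    have pnz: "?p \<noteq> 0" using nz aA by blast
    obtain f1 where f1: "coordfun f1" "f1 ?p \<noteq> 0" "V.dim (insert ?p (v ` ?A1)) \<le> card {x\<in>v ` ?A1. f1 x = 0} + 1"
      using hyperplane[of "v ` ?A1" ?p] fin(1) pnz by blast
    have ins: "insert ?p (v ` ?A1) = v ` A" using aA by auto
    have cs: "card {a'\<in>?A1. f1 (v a') \<noteq> 0} + d \<le> card ?A1 + 1"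
      using count_side[of ?A1 ?p v f1] f1(3) fin(1) ins unfolding d_def by simp
    have cA1: "card ?A1 + 1 = card A" using aA fin(1) by (metis Suc_eq_plus1 card_Suc_Diff1)
    have sub: "{a'\<in>?A1. \<not> par (v a') ?p \<and> f1 (v a') \<noteq> 0 \<and> f1 (v a') \<noteq> 0} \<subseteq> {a'\<in>?A1. f1 (v a') \<noteq> 0}" by blast
    have "card {a'\<in>?A1. \<not> par (v a') ?p \<and> f1 (v a') \<noteq> 0 \<and> f1 (v a') \<noteq> 0} \<le> card {a'\<in>?A1. f1 (v a') \<noteq> 0}"
      by (rule card_mono[OF _ sub]) (use fin(1) in simp)
    then have "card {a'\<in>?A1. \<not> par (v a') ?p \<and> f1 (v a') \<noteq> 0 \<and> f1 (v a') \<noteq> 0} + 2 \<le> m'"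
      using cs cA1 bnd2 m' unfolding d_def by linarith
    then obtain fs where fs: "\<forall>k. coordfun (fs k)" "\<forall>k<m'. fs k ?p \<noteq> 0"
        "\<forall>a'\<in>?A1. \<not> par (v a') ?p \<longrightarrow> (\<exists>k<m'. fs k (v a') = 0)"
      using build_fs[of ?A1 ?p f1 f1 v m'] fin(1) pnz f1 by blast
    have fs3: "\<forall>a'\<in>A. a' \<noteq> a \<longrightarrow> (\<exists>k<m'. fs k (v a') = 0)"
      using fs(3) vp aA by blast
    have T': "\<forall>js. (\<Sum>i\<in>A <+> B. case_sum \<alpha> \<beta> i * (\<Prod>k<Suc m'. case_sum v u i (js k))) = 0"
      using T m' by simp
    show ?thesis by (rule flatten[OF fin T' aA _ fs(1) fs(2) fs3]) (use nz aA in blast)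
  qed
  have dB: "d \<le> V.dim (u ` B)" unfolding d_def
    by (rule dim_mono_fin) (use vspan fin(2) in auto)
  let ?p = "w i0"
  have pnz: "?p \<noteq> 0" using i0 nz unfolding w_def by auto
  define A1 where "A1 = {a\<in>A. \<not> par (v a) ?p}"
  define B1 where "B1 = {b\<in>B. \<not> par (u b) ?p}"
  have fA1: "finite A1" "finite B1" unfolding A1_def B1_def using fin by auto
  obtain f1 where f1: "coordfun f1" "f1 ?p \<noteq> 0" "V.dim (insert ?p (v ` A1)) \<le> card {x\<in>v ` A1. f1 x = 0} + 1"
    using hyperplane[of "v ` A1" ?p] fA1 pnz by blast
  obtain f2 where f2: "coordfun f2" "f2 ?p \<noteq> 0" "V.dim (insert ?p (u ` B1)) \<le> card {x\<in>u ` B1. f2 x = 0} + 1"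
    using hyperplane[of "u ` B1" ?p] fA1 pnz by blast
  have d1: "d \<le> V.dim (insert ?p (v ` A1))" unfolding d_def
  proof (rule dim_mono_fin)
    show "v ` A \<subseteq> V.span (insert ?p (v ` A1))"
    proof
      fix x assume "x \<in> v ` A"
      then obtain a where a: "a \<in> A" "x = v a" by blast
      show "x \<in> V.span (insert ?p (v ` A1))"
      proof (cases "par (v a) ?p")
        case True then show ?thesis using a span_par by blast
      next
        case False then have "x \<in> insert ?p (v ` A1)" using a unfolding A1_def by blast
        then show ?thesis by (rule V.span_base)
      qed
    qed
  qed (use fA1 in simp)
  have d2: "V.dim (u ` B) \<le> V.dim (insert ?p (u ` B1))"
  proof (rule dim_mono_fin)
    show "u ` B \<subseteq> V.span (insert ?p (u ` B1))"
    proof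
      fix x assume "x \<in> u ` B"
      then obtain b where b: "b \<in> B" "x = u b" by blast
      show "x \<in> V.span (insert ?p (u ` B1))"
      proof (cases "par (u b) ?p")
        case True then show ?thesis using b span_par by blast
      next
        case False then have "x \<in> insert ?p (u ` B1)" using b unfolding B1_def by blast
        then show ?thesis by (rule V.span_base)
      qed
    qed
  qed (use fA1 in simp)
  have cs1: "card {a\<in>A1. f1 (v a) \<noteq> 0} + V.dim (insert ?p (v ` A1)) \<le> card A1 + 1"
    by (rule count_side[OF fA1(1) f1(3)])
  have cs2: "card {b\<in>B1. f2 (u b) \<noteq> 0} + V.dim (insert ?p (u ` B1)) \<le> card B1 + 1"
    by (rule count_side[OF fA1(2) f2(3)])
  have cAB: "card A1 + card B1 + 1 \<le> card A + card B"
  proof (cases i0)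
    case (Inl a0)
    then have a0: "a0 \<in> A" "a0 \<notin> A1" using i0 par_refl unfolding A1_def w_def by auto
    then have "A1 \<subset> A" unfolding A1_def by blast
    then have "card A1 < card A" using fin(1) by (rule psubset_card_mono[rotated])
    moreover have "card B1 \<le> card B" unfolding B1_def by (rule card_mono[OF fin(2)]) auto
    ultimately show ?thesis by linarith
  next
    case (Inr b0)
    then have b0: "b0 \<in> B" "b0 \<notin> B1" using i0 par_refl unfolding B1_def w_def by auto
    then have "B1 \<subset> B" unfolding B1_def by blast
    then have "card B1 < card B" using fin(2) by (rule psubset_card_mono[rotated])
    moreover have "card A1 \<le> card A" unfolding A1_def by (rule card_mono[OF fin(1)]) auto
    ultimately show ?thesis by linarith
  qed
  let ?U = "{i\<in>I. \<not> par (w i) ?p \<and> f1 (w i) \<noteq> 0 \<and> f2 (w i) \<noteq> 0}"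
  have "?U \<subseteq> Inl ` {a\<in>A1. f1 (v a) \<noteq> 0} \<union> Inr ` {b\<in>B1. f2 (u b) \<noteq> 0}"
  proof
    fix i assume "i \<in> ?U"
    then show "i \<in> Inl ` {a\<in>A1. f1 (v a) \<noteq> 0} \<union> Inr ` {b\<in>B1. f2 (u b) \<noteq> 0}"
      unfolding I_def w_def A1_def B1_def by (cases i) auto
  qed
  then have "card ?U \<le> card (Inl ` {a\<in>A1. f1 (v a) \<noteq> 0} \<union> Inr ` {b\<in>B1. f2 (u b) \<noteq> 0})"
    by (rule card_mono[rotated]) (use fA1 in simp)
  also have "\<dots> \<le> card (Inl ` {a\<in>A1. f1 (v a) \<noteq> 0} :: (nat + nat) set) + card (Inr ` {b\<in>B1. f2 (u b) \<noteq> 0} :: (nat + nat) set)"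
    by (rule card_Un_le)
  also have "\<dots> \<le> card {a\<in>A1. f1 (v a) \<noteq> 0} + card {b\<in>B1. f2 (u b) \<noteq> 0}"
    by (simp add: card_image)
  finally have cU: "card ?U + 2 \<le> m"
    using cs1 cs2 d1 d2 dB cAB bnd1 unfolding d_def by linarith
  obtain fs where fs: "\<forall>k. coordfun (fs k)" "\<forall>k<m. fs k ?p \<noteq> 0" "\<forall>i\<in>I. \<not> par (w i) ?p \<longrightarrow> (\<exists>k<m. fs k (w i) = 0)"
    using build_fs[OF fI pnz f1(1,2) f2(1,2) cU] by blast
  have T': "\<forall>js. (\<Sum>i\<in>I. c i * (\<Prod>k<m. w i (js k))) = 0" using T unfolding I_def c_def w_def .
  show ?thesis using class_zero[OF fI T' fs(1) fs(2) fs(3)] unfolding I_def c_def w_def .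
qed



lemma par_sym: assumes "par x y" "x \<noteq> 0" shows "par y x"
proof -
  obtain t where t: "x = vscale t y" using assms(1) unfolding par_def by blast
  then have "t \<noteq> 0" using assms(2) by (auto simp: vscale_def fun_eq_iff)
  then have "y = vscale (1 / t) x" using t by (auto simp: vscale_def fun_eq_iff)
  then show ?thesis unfolding par_def by blast
qed

lemma par_trans: assumes "par x y" "par y z" shows "par x z"
proof -
  obtain t where t: "x = vscale t y" using assms(1) unfolding par_def by blast
  obtain s where s: "y = vscale s z" using assms(2) unfolding par_def by blast
  have "x = vscale (t * s) z" using t s by (auto simp: vscale_def fun_eq_iff)
  then show ?thesis unfolding par_def by blast
qed

lemma single_nz:
  fixes x :: "'i \<Rightarrow> 'f::field"
  assumes "\<gamma> \<noteq> 0" "x \<noteq> 0" shows "\<exists>js. \<gamma> * (\<Prod>k<m. x (js k)) \<noteq> 0"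
proof -
  obtain j where "x j \<noteq> 0" using assms(2) by (auto simp: fun_eq_iff)
  then show ?thesis using assms(1) by (intro exI[of _ "\<lambda>_. j"]) simp
qed

lemma finish:
  fixes v u :: "nat \<Rightarrow> ('i \<Rightarrow> 'f::field)" and \<alpha> \<beta> :: "nat \<Rightarrow> 'f" and m n r' :: nat
  defines "A \<equiv> {1..n}" and "B \<equiv> {1..r'}"
  assumes nz: "\<forall>a\<in>A. v a \<noteq> 0 \<and> \<alpha> a \<noteq> 0" "\<forall>b\<in>B. u b \<noteq> 0 \<and> \<beta> b \<noteq> 0"
  and vp: "\<forall>a\<in>A. \<forall>a'\<in>A. a \<noteq> a' \<longrightarrow> \<not> par (v a) (v a')"
  and Z: "\<forall>i0\<in>A <+> B. \<forall>js. (\<Sum>i\<in>{i\<in>A <+> B. par (case_sum v u i) (case_sum v u i0)}.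
            case_sum \<alpha> (\<lambda>b. - \<beta> b) i * (\<Prod>k<m. case_sum v u i (js k))) = 0"
  and H: "r' \<le> n \<or> (\<forall>b\<in>B. \<forall>b'\<in>B. b \<noteq> b' \<longrightarrow> \<not> par (u b) (u b'))"
  shows "r' = n \<and> term_mset m n \<alpha> v = term_mset m r' \<beta> u"
proof -
  define w where "w = case_sum v u"
  define c where "c = case_sum \<alpha> (\<lambda>b. - \<beta> b)"
  define P where "P = (\<lambda>x js. \<Prod>k<m. (x::'i \<Rightarrow> 'f) (js k))"
  define C where "C = (\<lambda>a. {b\<in>B. par (u b) (v a)})"
  have fA: "finite A" "finite B" unfolding A_def B_def by auto
  have fC: "finite (C a)" for a unfolding C_def using fA by auto
  have Z': "\<forall>i0\<in>A <+> B. \<forall>js. (\<Sum>i\<in>{i\<in>A <+> B. par (w i) (w i0)}. c i * P (w i) js) = 0"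
    using Z unfolding w_def c_def P_def .
  have clA: "{i\<in>A <+> B. par (w i) (v a)} = insert (Inl a) (Inr ` C a)" if aA: "a \<in> A" for a
  proof
    show "{i\<in>A <+> B. par (w i) (v a)} \<subseteq> insert (Inl a) (Inr ` C a)"
    proof
      fix i assume i: "i \<in> {i\<in>A <+> B. par (w i) (v a)}"
      show "i \<in> insert (Inl a) (Inr ` C a)"
      proof (cases i)
        case (Inl a') then show ?thesis using i vp aA unfolding w_def by auto
      next
        case (Inr b) then show ?thesis using i unfolding w_def C_def by auto
      qed
    qed
    show "insert (Inl a) (Inr ` C a) \<subseteq> {i\<in>A <+> B. par (w i) (v a)}"
      using aA par_refl unfolding C_def w_def by auto
  qed
  have sumA: "(\<Sum>i\<in>{i\<in>A <+> B. par (w i) (v a)}. c i * P (w i) js) = \<alpha> a * P (v a) js - (\<Sum>b\<in>C a. \<beta> b * P (u b) js)"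
    if aA: "a \<in> A" for a js
  proof -
    have "(\<Sum>i\<in>{i\<in>A <+> B. par (w i) (v a)}. c i * P (w i) js) = (\<Sum>i\<in>insert (Inl a) (Inr ` C a). c i * P (w i) js)"
      using clA[OF aA] by simp
    also have "\<dots> = c (Inl a) * P (w (Inl a)) js + (\<Sum>i\<in>Inr ` C a. c i * P (w i) js)"
      by (rule sum.insert) (use fC in auto)
    also have "(\<Sum>i\<in>Inr ` C a. c i * P (w i) js) = (\<Sum>b\<in>C a. c (Inr b) * P (w (Inr b)) js)"
      by (subst sum.reindex) auto
    finally show ?thesis unfolding c_def w_def by (simp add: sum_negf)
  qed
  have C1: "C a \<noteq> {}" if aA: "a \<in> A" for a
  proof
    assume e: "C a = {}"
    obtain js where "\<alpha> a * P (v a) js \<noteq> 0" using single_nz[of "\<alpha> a" "v a" m] nz aA unfolding P_def by blast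
    moreover have "(\<Sum>i\<in>{i\<in>A <+> B. par (w i) (v a)}. c i * P (w i) js) = 0"
      using Z' aA unfolding w_def by force
    ultimately show False using sumA[OF aA, of js] e by simp
  qed
  have C2: "C a \<inter> C a' = {}" if "a \<in> A" "a' \<in> A" "a \<noteq> a'" for a a'
  proof (rule ccontr)
    assume "C a \<inter> C a' \<noteq> {}"
    then obtain b where b: "b \<in> B" "par (u b) (v a)" "par (u b) (v a')" unfolding C_def by blast
    have "par (v a) (u b)" using par_sym b nz by blast
    then have "par (v a) (v a')" using par_trans b(3) by blast
    then show False using vp that by blast
  qed
  have cU: "card (\<Union>a\<in>A. C a) = (\<Sum>a\<in>A. card (C a))"
    by (rule card_UN_disjoint) (use fA fC C2 in auto)
  have UB: "(\<Union>a\<in>A. C a) \<subseteq> B" unfolding C_def by auto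
  have ge1: "card (C a) \<ge> 1" if "a \<in> A" for a using C1[OF that] fC
    by (simp add: Suc_le_eq card_gt_0_iff)
  have both: "(\<forall>a\<in>A. card (C a) = 1) \<and> (\<Union>a\<in>A. C a) = B"
    using H
  proof
    assume r: "r' \<le> n"
    have "(\<Sum>a\<in>A. card (C a)) \<le> card B" using cU UB card_mono[OF fA(2) UB] by simp
    then have s: "(\<Sum>a\<in>A. card (C a)) \<le> card A" using r unfolding A_def B_def by simp
    have hh: "card (C a) - 1 + 1 = card (C a)" if "a \<in> A" for a using ge1[OF that] by linarith
    have "(\<Sum>a\<in>A. card (C a) - 1) + (\<Sum>a\<in>A. 1) = (\<Sum>a\<in>A. card (C a) - 1 + 1)"
      by (simp only: sum.distrib)
    also have "\<dots> = (\<Sum>a\<in>A. card (C a))" by (rule sum.cong[OF refl]) (rule hh)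
    finally have "(\<Sum>a\<in>A. card (C a) - 1) + (\<Sum>a\<in>A. 1) = (\<Sum>a\<in>A. card (C a))" .
    then have "(\<Sum>a\<in>A. card (C a) - 1) = 0" using s by simp
    then have "\<forall>a\<in>A. card (C a) - 1 = 0" using fA(1) by simp
    then have c1: "\<forall>a\<in>A. card (C a) = 1" using ge1 by (metis le_antisym diff_is_0_eq)
    then have "(\<Sum>a\<in>A. card (C a)) = card A" by simp
    then have "card (\<Union>a\<in>A. C a) \<ge> card B" using cU r unfolding A_def B_def by simp
    then have "(\<Union>a\<in>A. C a) = B" using card_subset_eq[OF fA(2) UB] card_mono[OF fA(2) UB] by simp
    then show ?thesis using c1 by blast
  next
    assume up: "\<forall>b\<in>B. \<forall>b'\<in>B. b \<noteq> b' \<longrightarrow> \<not> par (u b) (u b')"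
    have le1: "card (C a) \<le> 1" if aA: "a \<in> A" for a
    proof -
      have "\<forall>b\<in>C a. \<forall>b'\<in>C a. b = b'"
      proof (intro ballI)
        fix b b' assume "b \<in> C a" "b' \<in> C a"
        then have h: "b \<in> B" "b' \<in> B" "par (u b) (v a)" "par (u b') (v a)" unfolding C_def by auto
        have "par (v a) (u b')" using par_sym h nz by blast
        then have "par (u b) (u b')" using par_trans h(3) by blast
        then show "b = b'" using up h by blast
      qed
      then show ?thesis using card_le_Suc0_iff_eq[OF fC] by simp
    qed
    have cover: "B \<subseteq> (\<Union>a\<in>A. C a)"
    proof
      fix b assume bB: "b \<in> B"
      show "b \<in> (\<Union>a\<in>A. C a)"
      proof (rule ccontr)
        assume nb: "b \<notin> (\<Union>a\<in>A. C a)"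
        have cl: "{i\<in>A <+> B. par (w i) (w (Inr b))} = {Inr b}"
        proof
          show "{i\<in>A <+> B. par (w i) (w (Inr b))} \<subseteq> {Inr b}"
          proof
            fix i assume i: "i \<in> {i\<in>A <+> B. par (w i) (w (Inr b))}"
            show "i \<in> {Inr b}"
            proof (cases i)
              case (Inl a)
              then have "a \<in> A" "par (v a) (u b)" using i unfolding w_def by auto
              then have "par (u b) (v a)" using par_sym nz by blast
              then show ?thesis using nb bB \<open>a \<in> A\<close> unfolding C_def by blast
            next
              case (Inr b') then show ?thesis using i up bB unfolding w_def by auto
            qed
          qed
          show "{Inr b} \<subseteq> {i\<in>A <+> B. par (w i) (w (Inr b))}" using bB par_refl by auto
        qed
        obtain js where "\<beta> b * P (u b) js \<noteq> 0" using single_nz[of "\<beta> b" "u b" m] nz bB unfolding P_def by blast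
        moreover have "(\<Sum>i\<in>{i\<in>A <+> B. par (w i) (w (Inr b))}. c i * P (w i) js) = 0"
          using Z' bB by blast
        ultimately show False using cl unfolding c_def w_def by simp
      qed
    qed
    show ?thesis using le1 ge1 cover UB by (metis le_antisym subset_antisym)
  qed
  have rn: "r' = n"
  proof -
    have "card B = (\<Sum>a\<in>A. card (C a))" using cU both by simp
    also have "\<dots> = card A" using both by simp
    finally show ?thesis unfolding A_def B_def by simp
  qed
  define \<sigma> where "\<sigma> = (\<lambda>a. THE b. b \<in> C a)"
  have Cs: "C a = {\<sigma> a}" if aA: "a \<in> A" for a
  proof -
    obtain b where "C a = {b}" using both aA card_1_singletonE by blast
    then show ?thesis unfolding \<sigma>_def by simp
  qed
  have bij: "bij_betw \<sigma> A B"
  proof (rule bij_betw_imageI)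
    show "inj_on \<sigma> A"
    proof (rule inj_onI)
      fix a a' assume h: "a \<in> A" "a' \<in> A" "\<sigma> a = \<sigma> a'"
      show "a = a'" using C2[OF h(1,2)] Cs h by (metis Int_insert_left_if1 insert_not_empty singletonI)
    qed
    show "\<sigma> ` A = B" using both Cs by auto
  qed
  have teq: "sym_tensor m (\<alpha> a) (v a) = sym_tensor m (\<beta> (\<sigma> a)) (u (\<sigma> a))" if aA: "a \<in> A" for a
  proof
    fix js
    have "(\<Sum>i\<in>{i\<in>A <+> B. par (w i) (v a)}. c i * P (w i) js) = 0"
      using Z' aA unfolding w_def by force
    then have "\<alpha> a * P (v a) js - \<beta> (\<sigma> a) * P (u (\<sigma> a)) js = 0" using sumA[OF aA, of js] Cs[OF aA] by simp
    then show "sym_tensor m (\<alpha> a) (v a) js = sym_tensor m (\<beta> (\<sigma> a)) (u (\<sigma> a)) js"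
      unfolding sym_tensor_def P_def by simp
  qed
  have "term_mset m r' \<beta> u = image_mset (\<lambda>b. sym_tensor m (\<beta> b) (u b)) (mset_set (\<sigma> ` A))"
    unfolding term_mset_def B_def[symmetric] using bij by (simp add: bij_betw_def)
  also have "\<dots> = image_mset (\<lambda>b. sym_tensor m (\<beta> b) (u b)) (image_mset \<sigma> (mset_set A))"
    using bij by (simp add: bij_betw_def image_mset_mset_set)
  also have "\<dots> = image_mset (\<lambda>a. sym_tensor m (\<beta> (\<sigma> a)) (u (\<sigma> a))) (mset_set A)"
    by (simp add: multiset.map_comp comp_def)
  also have "\<dots> = image_mset (\<lambda>a. sym_tensor m (\<alpha> a) (v a)) (mset_set A)"
    by (rule image_mset_cong) (use teq fA in auto)
  also have "\<dots> = term_mset m n \<alpha> v" unfolding term_mset_def A_def ..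
  finally show ?thesis using rn by simp
qed



lemma tensor_id:
  fixes v u :: "nat \<Rightarrow> ('i \<Rightarrow> 'f::field)" and \<alpha> \<beta> :: "nat \<Rightarrow> 'f"
  assumes "tensor_sum m n \<alpha> v = tensor_sum m r' \<beta> u"
  shows "\<forall>js. (\<Sum>i\<in>{1..n} <+> {1..r'}. case_sum \<alpha> (\<lambda>b. - \<beta> b) i * (\<Prod>k<m. case_sum v u i (js k))) = 0"
proof
  fix js
  have e: "tensor_sum m r \<gamma> x js = (\<Sum>a\<in>{1..r}. \<gamma> a * (\<Prod>k<m. x a (js k)))" for r \<gamma> and x :: "nat \<Rightarrow> 'i \<Rightarrow> 'f"
    unfolding tensor_sum_def sum_fun_apply sym_tensor_def by simp
  have "(\<Sum>i\<in>{1..n} <+> {1..r'}. case_sum \<alpha> (\<lambda>b. - \<beta> b) i * (\<Prod>k<m. case_sum v u i (js k)))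
      = tensor_sum m n \<alpha> v js - tensor_sum m r' \<beta> u js"
    unfolding e by (simp add: sum.Plus comp_def sum_negf)
  then show "(\<Sum>i\<in>{1..n} <+> {1..r'}. case_sum \<alpha> (\<lambda>b. - \<beta> b) i * (\<Prod>k<m. case_sum v u i (js k))) = 0"
    using assms by simp
qed

lemma main_step:
  fixes v u :: "nat \<Rightarrow> ('i \<Rightarrow> 'f::field)" and \<alpha> \<beta> :: "nat \<Rightarrow> 'f" and m n r' :: nat
  assumes nz: "\<forall>a\<in>{1..n}. v a \<noteq> 0 \<and> \<alpha> a \<noteq> 0" "\<forall>b\<in>{1..r'}. u b \<noteq> 0 \<and> \<beta> b \<noteq> 0"
  and vp: "\<forall>a\<in>{1..n}. \<forall>a'\<in>{1..n}. a \<noteq> a' \<longrightarrow> \<not> par (v a) (v a')"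
  and eq: "tensor_sum m n \<alpha> v = tensor_sum m r' \<beta> u"
  and bnd1: "n + r' + 3 \<le> m + 2 * V.dim (v ` {1..n})"
  and bnd2: "n + 3 \<le> m + V.dim (v ` {1..n})"
  and H: "r' \<le> n \<or> (\<forall>b\<in>{1..r'}. \<forall>b'\<in>{1..r'}. b \<noteq> b' \<longrightarrow> \<not> par (u b) (u b'))"
  shows "r' = n \<and> term_mset m n \<alpha> v = term_mset m r' \<beta> u"
proof (rule finish[OF nz vp _ H])
  have T: "\<forall>js. (\<Sum>i\<in>{1..n} <+> {1..r'}. case_sum \<alpha> (\<lambda>b. - \<beta> b) i * (\<Prod>k<m. case_sum v u i (js k))) = 0"
    by (rule tensor_id[OF eq])
  show "\<forall>i0\<in>{1..n} <+> {1..r'}. \<forall>js. (\<Sum>i\<in>{i\<in>{1..n} <+> {1..r'}. par (case_sum v u i) (case_sum v u i0)}.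
            case_sum \<alpha> (\<lambda>b. - \<beta> b) i * (\<Prod>k<m. case_sum v u i (js k))) = 0"
  proof (intro ballI allI)
    fix i0 js assume i0: "i0 \<in> {1..n} <+> {1..r'}"
    show "(\<Sum>i\<in>{i\<in>{1..n} <+> {1..r'}. par (case_sum v u i) (case_sum v u i0)}.
            case_sum \<alpha> (\<lambda>b. - \<beta> b) i * (\<Prod>k<m. case_sum v u i (js k))) = 0"
      by (rule core[OF _ _ _ _ _ vp T _ _ i0]) (use nz bnd1 bnd2 in auto)
  qed
qed

theorem corollary9p2:
  fixes W :: "('i \<Rightarrow> 'f::field) set"
    and m n :: nat
    and v :: "nat \<Rightarrow> ('i \<Rightarrow> 'f)"
    and \<alpha> :: "nat \<Rightarrow> 'f"
  assumes "n \<ge> 2" and "m \<ge> 2"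
    and "CHAR('f) = 0 \<or> CHAR('f) > m"
    and "module.subspace vscale W"
    and "\<forall>a\<in>{1..n}. v a \<in> W \<and> v a \<noteq> 0"
    and "krank v n \<ge> 2"
    and "\<forall>a\<in>{1..n}. \<alpha> a \<noteq> 0"
  defines "d \<equiv> vector_space.dim vscale (v ` {1..n})"
  shows "(2 * n + 1 \<le> m + 2 * d - 2 \<longrightarrow> unique_waring_decomp W m n \<alpha> v)
       \<and> (\<forall>r::nat. r \<ge> n \<and> n + r + 1 \<le> m + 2 * d - 2 \<longrightarrow> unique_sym_decomp W m n \<alpha> v r)"
proof -
  have nzv: "\<forall>a\<in>{1..n}. v a \<noteq> 0 \<and> \<alpha> a \<noteq> 0" using assms(5,7) by blast
  have vp: "\<forall>a\<in>{1..n}. \<forall>a'\<in>{1..n}. a \<noteq> a' \<longrightarrow> \<not> par (v a) (v a')"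
    using krank_pairs[OF assms(6)] by blast
  have dn: "d \<le> n" unfolding d_def
    using V.dim_le_card'[of "v ` {1..n}"] card_image_le[of "{1..n}" v] by simp
  show ?thesis
  proof (intro conjI impI allI)
    assume b: "2 * n + 1 \<le> m + 2 * d - 2"
    then have b': "2 * n + 3 \<le> m + 2 * d" using assms(2) by linarith
    show "unique_waring_decomp W m n \<alpha> v" unfolding unique_waring_decomp_def
    proof (intro allI impI)
      fix r' u \<beta> assume h: "r' \<le> n \<and> (\<forall>a\<in>{1..r'}. u a \<in> W \<and> u a \<noteq> 0 \<and> \<beta> a \<noteq> 0)
        \<and> tensor_sum m n \<alpha> v = tensor_sum m r' \<beta> u"
      show "r' = n \<and> term_mset m n \<alpha> v = term_mset m r' \<beta> u"
        by (rule main_step[OF nzv _ vp]) (use h b' dn in \<open>auto simp: d_def\<close>)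
    qed
  next
    fix r :: nat assume b: "n \<le> r \<and> n + r + 1 \<le> m + 2 * d - 2"
    then have b': "n + r + 3 \<le> m + 2 * d" using assms(2) by linarith
    show "unique_sym_decomp W m n \<alpha> v r" unfolding unique_sym_decomp_def
    proof (intro allI impI)
      fix r' u \<beta> assume h: "r' \<le> r \<and> (\<forall>a\<in>{1..r'}. u a \<in> W \<and> u a \<noteq> 0 \<and> \<beta> a \<noteq> 0)
        \<and> tensor_sum m n \<alpha> v = tensor_sum m r' \<beta> u"
      show "krank u r' = 1 \<or> r' = n \<and> term_mset m n \<alpha> v = term_mset m r' \<beta> u"
      proof (cases "krank u r' = 1")
        case True then show ?thesis by simp
      next
        case False
        have up: "\<forall>b\<in>{1..r'}. \<forall>b'\<in>{1..r'}. b \<noteq> b' \<longrightarrow> \<not> par (u b) (u b')"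
        proof (cases "r' = 0")
          case True then show ?thesis by simp
        next
          case r0: False
          have "krank u r' \<ge> 1" using krank_ge1[of r' u] r0 h by auto
          then have "krank u r' \<ge> 2" using False by linarith
          then show ?thesis using krank_pairs by blast
        qed
        have "r' = n \<and> term_mset m n \<alpha> v = term_mset m r' \<beta> u"
          by (rule main_step[OF nzv _ vp]) (use h b b' dn up in \<open>auto simp: d_def\<close>)
        then show ?thesis by simp
      qed
    qed
  qed
qed

end
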